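(* For the client-server mechanism with parameters $\sigma\in(0,1)$, $c>0$, $q\in(0,1)$, for every initial state $\theta(0)\in\mathbb{R}^N$ and every $b\in(0,1)$, with probability at least $1-b$ the limits $\lim_{t\to\infty}\theta_i(t)$ exist, are equal for all $i\in[N]$ to a common value $\theta^*$, and $$\Big|\theta^*-\frac1N\sum_{i=1}^N\theta_i(0)\Big|\le r,\qquad r=\frac{\sqrt2\,c\,\sigma}{\sqrt{bN(1-q^2)}}.$$ That is, the mechanism achieves $(b,r)$-accuracy.
   Context: Client-server mechanism with parameters $\sigma\in(0,1)$, $c>0$, $q\in(0,1)$: $N$ clients with real initial states $\theta_1(0),\dots,\theta_N(0)$ and one server. At each round $t=0,1,2,\dots$: client $i$ sends $x_i(t)=\theta_i(t)+\eta_i(t)$, where the $\eta_i(t)$ ($i\in[N],t\ge0$) are mutually independent, Laplace distributed with density $\frac{1}{2cq^t}e^{-|x|/(cq^t)}$ (mean $0$, variance $2c^2q^{2t}$); the server sets $y(t)=\frac1N\sum_{i=1}^N x_i(t)$ and sends it to all clients; each client updates $\theta_i(t+1)=(1-\sigma)\theta_i(t)+\sigma y(t)$. A mechanism achieves $(b,r)$-accuracy from $\theta(0)$ if with probability at least $1-b$ the execution converges to a consensus state within distance $r$ of the (appropriate) average of the initial values. *)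

theory Defs
  imports "HOL-Probability.Probability"
begin

definition laplace_density :: "real \<Rightarrow> real \<Rightarrow> real" where
  "laplace_density s x = exp (- \<bar>x\<bar> / s) / (2 * s)"

text \<open>State of the client-server mechanism. Clients are indexed by i < N.
  cs_state N \<sigma> \<theta>0 \<eta> t i is theta_i(t), where \<eta> i t is the noise added by client i
  at round t.\<close>
primrec cs_state :: "nat \<Rightarrow> real \<Rightarrow> (nat \<Rightarrow> real) \<Rightarrow> (nat \<Rightarrow> nat \<Rightarrow> real) \<Rightarrow> nat \<Rightarrow> nat \<Rightarrow> real" where
  "cs_state N \<sigma> \<theta>0 \<eta> 0 i = \<theta>0 i"
| "cs_state N \<sigma> \<theta>0 \<eta> (Suc t) i =
     (1 - \<sigma>) * cs_state N \<sigma> \<theta>0 \<eta> t i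
     + \<sigma> * ((\<Sum>j<N. cs_state N \<sigma> \<theta>0 \<eta> t j + \<eta> j t) / real N)"

end

theory Submission imports Defs begin
lemma lap_nonneg: "0 < s \<Longrightarrow> 0 \<le> laplace_density s x"
  by (simp add: laplace_density_def)

lemma lap_meas[measurable]: "laplace_density s \<in> borel_measurable borel"
  unfolding laplace_density_def[abs_def] by measurable

lemma lap_split:
  assumes s: "0 < s" and k: "k \<ge> 1"
  shows "ennreal (laplace_density s x * \<bar>x\<bar>^k) =
     ennreal (erlang_density 0 (1/s) x * x^k / 2)
   + ennreal (erlang_density 0 (1/s) (0 + -1 * x) * (0 + -1 * x)^k / 2)"
proof -
  consider "x > 0" | "x < 0" | "x = 0" by linarith
  then show ?thesis
  proof cases
    case 1 then show ?thesis using s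
      by (simp add: laplace_density_def erlang_density_def ennreal_mult'[symmetric] field_simps)
  next
    case 2
    have "(-x)^k = \<bar>x\<bar>^k" using 2 by simp
    then show ?thesis using s 2
      by (simp add: laplace_density_def erlang_density_def ennreal_mult'[symmetric] field_simps)
  next
    case 3 then show ?thesis using k by (simp add: zero_power)
  qed
qed

lemma lap_abs_moment:
  assumes s: "0 < s" and k: "k \<ge> 1"
  shows "(\<integral>\<^sup>+x. ennreal (laplace_density s x * \<bar>x\<bar>^k) \<partial>lborel) = ennreal (fact k * s^k)"
proof -
  define h where "h x = ennreal (erlang_density 0 (1/s) x * x^k / 2)" for x
  have hm[measurable]: "h \<in> borel_measurable borel" unfolding h_def[abs_def] by measurable
  have eq: "(\<lambda>x. ennreal (laplace_density s x * \<bar>x\<bar>^k)) = (\<lambda>x. h x + h (0 + -1 * x))"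
    using lap_split[OF s k] unfolding h_def by auto
  have H: "(\<integral>\<^sup>+x. h x \<partial>lborel) = ennreal (fact k * s^k / 2)"
  proof -
    have "(\<integral>\<^sup>+x. h x \<partial>lborel) = (\<integral>\<^sup>+x. ennreal (erlang_density 0 (1/s) x * x^k) * ennreal (1/2) \<partial>lborel)"
      unfolding h_def using s
      by (intro nn_integral_cong) (simp add: ennreal_mult'[symmetric] erlang_density_def zero_le_mult_iff del: ennreal_half)
    also have "\<dots> = (\<integral>\<^sup>+x. ennreal (erlang_density 0 (1/s) x * x^k) \<partial>lborel) * ennreal (1/2)"
      by (rule nn_integral_multc) measurable
    also have "\<dots> = ennreal (fact k / (fact 0 * (1/s)^k)) * ennreal (1/2)"
      using s nn_integral_erlang_ith_moment[of "1/s" 0 k] by (simp del: ennreal_half)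
    also have "\<dots> = ennreal (fact k * s^k / 2)"
      using s by (simp add: ennreal_mult'[symmetric] field_simps power_one_over del: ennreal_half)
    finally show ?thesis .
  qed
  have H2: "(\<integral>\<^sup>+x. h (0 + -1 * x) \<partial>lborel) = (\<integral>\<^sup>+x. h x \<partial>lborel)"
    using nn_integral_real_affine[OF hm, of "-1" 0] by simp
  have "(\<integral>\<^sup>+x. ennreal (laplace_density s x * \<bar>x\<bar>^k) \<partial>lborel) = (\<integral>\<^sup>+x. h x \<partial>lborel) + (\<integral>\<^sup>+x. h (0 + -1 * x) \<partial>lborel)"
    unfolding eq by (rule nn_integral_add) measurable
  also have "\<dots> = ennreal (fact k * s^k)" unfolding H2 H
    using s by (simp add: ennreal_plus[symmetric] del: ennreal_plus)
  finally show ?thesis .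
qed

lemma lap_integrable:
  assumes s: "0 < s" and k: "k \<ge> 1"
  shows "integrable lborel (\<lambda>x. laplace_density s x * x^k)"
proof (rule integrableI_bounded)
  show "(\<lambda>x. laplace_density s x * x^k) \<in> borel_measurable lborel" by measurable
  have "(\<integral>\<^sup>+x. ennreal (norm (laplace_density s x * x^k)) \<partial>lborel) = (\<integral>\<^sup>+x. ennreal (laplace_density s x * \<bar>x\<bar>^k) \<partial>lborel)"
    using s by (intro nn_integral_cong) (simp add: abs_mult power_abs lap_nonneg)
  then show "(\<integral>\<^sup>+x. ennreal (norm (laplace_density s x * x^k)) \<partial>lborel) < \<infinity>"
    using lap_abs_moment[OF s k] by simp
qed

lemma lap_integral_sq:
  assumes s: "0 < s"
  shows "(\<integral>x. laplace_density s x * x^2 \<partial>lborel) = 2 * s^2"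
proof -
  have "ennreal (\<integral>x. laplace_density s x * x^2 \<partial>lborel) = (\<integral>\<^sup>+x. ennreal (laplace_density s x * x^2) \<partial>lborel)"
    using s by (intro nn_integral_eq_integral[symmetric] lap_integrable) (auto simp: lap_nonneg)
  also have "\<dots> = (\<integral>\<^sup>+x. ennreal (laplace_density s x * \<bar>x\<bar>^2) \<partial>lborel)" by simp
  also have "\<dots> = ennreal (2 * s^2)" using lap_abs_moment[OF s, of 2] by simp
  finally show ?thesis using s
    by (subst (asm) ennreal_inj) (auto intro!: integral_nonneg_AE simp: lap_nonneg)
qed

lemma lap_integral_1:
  assumes s: "0 < s"
  shows "(\<integral>x. laplace_density s x * x \<partial>lborel) = 0"
proof -
  have "(\<integral>x. laplace_density s x * x \<partial>lborel) = \<bar>-1\<bar> *\<^sub>R (\<integral>x. laplace_density s (0 + -1*x) * (0 + -1*x) \<partial>lborel)"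
    by (rule lborel_integral_real_affine) simp
  also have "\<dots> = - (\<integral>x. laplace_density s x * x \<partial>lborel)"
    by (simp add: laplace_density_def)
  finally show ?thesis by simp
qed

context prob_space begin

lemma lap_rv:
  assumes d: "distributed M lborel X (\<lambda>x. ennreal (laplace_density s x))" and s: "0 < s"
  shows "random_variable borel X"
    and "integrable M X" and "expectation X = 0"
    and "integrable M (\<lambda>\<omega>. (X \<omega>)^2)" and "expectation (\<lambda>\<omega>. (X \<omega>)^2) = 2 * s^2"
    and "(\<integral>\<^sup>+\<omega>. ennreal \<bar>X \<omega>\<bar> \<partial>M) = ennreal s"
proof -
  show rv: "random_variable borel X"
    using distributed_measurable[OF d] by (simp add: measurable_lborel1)
  show "integrable M X"
    using distributed_integrable[OF d, of "\<lambda>x. x"] lap_integrable[OF s, of 1] s by (simp add: lap_nonneg)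
  show "expectation X = 0"
    using distributed_integral[OF d, of "\<lambda>x. x"] lap_integral_1[OF s] s by (simp add: lap_nonneg)
  show "integrable M (\<lambda>\<omega>. (X \<omega>)^2)"
    using distributed_integrable[OF d, of "\<lambda>x. x^2"] lap_integrable[OF s, of 2] s by (simp add: lap_nonneg)
  show "expectation (\<lambda>\<omega>. (X \<omega>)^2) = 2 * s^2"
    using distributed_integral[OF d, of "\<lambda>x. x^2"] lap_integral_sq[OF s] s by (simp add: lap_nonneg)
  have "(\<integral>\<^sup>+x. ennreal (laplace_density s x) * ennreal \<bar>x\<bar> \<partial>lborel) = (\<integral>\<^sup>+\<omega>. ennreal \<bar>X \<omega>\<bar> \<partial>M)"
    by (rule distributed_nn_integral[OF d]) measurable
  moreover have "(\<integral>\<^sup>+x. ennreal (laplace_density s x) * ennreal \<bar>x\<bar> \<partial>lborel) = ennreal s"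
    using lap_abs_moment[OF s, of 1] s by (simp add: ennreal_mult'[symmetric] lap_nonneg)
  ultimately show "(\<integral>\<^sup>+\<omega>. ennreal \<bar>X \<omega>\<bar> \<partial>M) = ennreal s" by simp
qed
end
context prob_space begin

lemma indep_pair:
  fixes Y :: "'i \<Rightarrow> 'a \<Rightarrow> real"
  assumes ind: "indep_vars (\<lambda>_. borel) Y I" and kl: "k \<in> I" "l \<in> I" "k \<noteq> l"
    and int: "integrable M (Y k)" "integrable M (Y l)"
  shows "integrable M (\<lambda>\<omega>. Y k \<omega> * Y l \<omega>)"
    and "expectation (\<lambda>\<omega>. Y k \<omega> * Y l \<omega>) = expectation (Y k) * expectation (Y l)"
proof -
  have ind2: "indep_vars (\<lambda>_. borel) Y {k, l}"
    using ind kl by (rule_tac indep_vars_subset) auto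
  have "integrable M (\<lambda>\<omega>. \<Prod>i\<in>{k,l}. Y i \<omega>)"
    using ind2 int by (intro indep_vars_integrable) auto
  then show "integrable M (\<lambda>\<omega>. Y k \<omega> * Y l \<omega>)" using kl by simp
  have "expectation (\<lambda>\<omega>. \<Prod>i\<in>{k,l}. Y i \<omega>) = (\<Prod>i\<in>{k,l}. expectation (Y i))"
    using ind2 int by (intro indep_vars_lebesgue_integral) auto
  then show "expectation (\<lambda>\<omega>. Y k \<omega> * Y l \<omega>) = expectation (Y k) * expectation (Y l)"
    using kl by simp
qed

lemma sum_sq_expectation:
  fixes Y :: "'i \<Rightarrow> 'a \<Rightarrow> real"
  assumes ind: "indep_vars (\<lambda>_. borel) Y I" and K: "finite K" "K \<subseteq> I"
    and int: "\<And>k. k \<in> K \<Longrightarrow> integrable M (Y k)"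
    and z: "\<And>k. k \<in> K \<Longrightarrow> expectation (Y k) = 0"
    and int2: "\<And>k. k \<in> K \<Longrightarrow> integrable M (\<lambda>\<omega>. (Y k \<omega>)^2)"
  shows "integrable M (\<lambda>\<omega>. (\<Sum>k\<in>K. Y k \<omega>)^2)"
    and "expectation (\<lambda>\<omega>. (\<Sum>k\<in>K. Y k \<omega>)^2) = (\<Sum>k\<in>K. expectation (\<lambda>\<omega>. (Y k \<omega>)^2))"
proof -
  have sq: "(\<lambda>\<omega>. (\<Sum>k\<in>K. Y k \<omega>)^2) = (\<lambda>\<omega>. \<Sum>k\<in>K. \<Sum>l\<in>K. Y k \<omega> * Y l \<omega>)"
    by (simp add: power2_eq_square sum_product)
  have pi: "integrable M (\<lambda>\<omega>. Y k \<omega> * Y l \<omega>)" if "k \<in> K" "l \<in> K" for k l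
  proof (cases "k = l")
    case True then show ?thesis using int2[OF that(1)] by (simp add: power2_eq_square)
  next
    case False then show ?thesis using indep_pair(1)[OF ind _ _ False int[OF that(1)] int[OF that(2)]] that K by auto
  qed
  have pe: "expectation (\<lambda>\<omega>. Y k \<omega> * Y l \<omega>) = (if k = l then expectation (\<lambda>\<omega>. (Y k \<omega>)^2) else 0)"
    if "k \<in> K" "l \<in> K" for k l
  proof (cases "k = l")
    case True then show ?thesis by (simp add: power2_eq_square)
  next
    case False then show ?thesis using indep_pair(2)[OF ind _ _ False int[OF that(1)] int[OF that(2)]] that K z by auto
  qed
  show "integrable M (\<lambda>\<omega>. (\<Sum>k\<in>K. Y k \<omega>)^2)"
    unfolding sq using pi by auto
  have "expectation (\<lambda>\<omega>. (\<Sum>k\<in>K. Y k \<omega>)^2) = (\<Sum>k\<in>K. \<Sum>l\<in>K. expectation (\<lambda>\<omega>. Y k \<omega> * Y l \<omega>))"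
    unfolding sq using pi by (simp add: Bochner_Integration.integral_sum Bochner_Integration.integrable_sum)
  also have "\<dots> = (\<Sum>k\<in>K. \<Sum>l\<in>K. (if k = l then expectation (\<lambda>\<omega>. (Y k \<omega>)^2) else 0))"
    using pe by (intro sum.cong) auto
  also have "\<dots> = (\<Sum>k\<in>K. expectation (\<lambda>\<omega>. (Y k \<omega>)^2))"
    using K by (simp add: sum.delta)
  finally show "expectation (\<lambda>\<omega>. (\<Sum>k\<in>K. Y k \<omega>)^2) = (\<Sum>k\<in>K. expectation (\<lambda>\<omega>. (Y k \<omega>)^2))" .
qed
end

lemma cs_sum_step:
  fixes e :: "nat \<Rightarrow> nat \<Rightarrow> real" and \<theta>0 :: "nat \<Rightarrow> real"
  assumes N: "N \<ge> 1"
  shows "(\<Sum>j<N. cs_state N \<sigma> \<theta>0 e (Suc t) j) = (\<Sum>j<N. cs_state N \<sigma> \<theta>0 e t j) + \<sigma> * (\<Sum>j<N. e j t)"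
proof -
  define S where "S = (\<Sum>j<N. cs_state N \<sigma> \<theta>0 e t j)"
  define E where "E = (\<Sum>j<N. e j t)"
  have Nr: "real N > 0" using N by simp
  have "(\<Sum>j<N. cs_state N \<sigma> \<theta>0 e (Suc t) j) = (\<Sum>j<N. (1-\<sigma>) * cs_state N \<sigma> \<theta>0 e t j + \<sigma> * ((S + E) / real N))"
    by (simp add: S_def E_def sum.distrib)
  also have "\<dots> = (1-\<sigma>) * S + real N * (\<sigma> * ((S + E) / real N))"
    by (simp add: sum.distrib sum_distrib_left[symmetric] S_def)
  also have "\<dots> = S + \<sigma> * E" using Nr by (simp add: field_simps)
  finally show ?thesis by (simp add: S_def E_def)
qed

lemma cs_dev_step:
  fixes e :: "nat \<Rightarrow> nat \<Rightarrow> real" and \<theta>0 :: "nat \<Rightarrow> real"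
  assumes N: "N \<ge> 1"
  shows "cs_state N \<sigma> \<theta>0 e (Suc t) i - (\<Sum>j<N. cs_state N \<sigma> \<theta>0 e (Suc t) j) / real N
     = (1-\<sigma>) * (cs_state N \<sigma> \<theta>0 e t i - (\<Sum>j<N. cs_state N \<sigma> \<theta>0 e t j) / real N)"
proof -
  define S where "S = (\<Sum>j<N. cs_state N \<sigma> \<theta>0 e t j)"
  define E where "E = (\<Sum>j<N. e j t)"
  define x where "x = cs_state N \<sigma> \<theta>0 e t i"
  have Nr: "real N > 0" using N by simp
  have a: "cs_state N \<sigma> \<theta>0 e (Suc t) i = (1-\<sigma>) * x + \<sigma> * ((S + E) / real N)"
    by (simp add: S_def E_def x_def sum.distrib)
  have b: "(\<Sum>j<N. cs_state N \<sigma> \<theta>0 e (Suc t) j) = S + \<sigma> * E"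
    unfolding S_def E_def by (rule cs_sum_step[OF N])
  show ?thesis unfolding a b using Nr by (simp add: field_simps flip: S_def x_def)
qed

lemma cs_closed:
  fixes e :: "nat \<Rightarrow> nat \<Rightarrow> real" and \<theta>0 :: "nat \<Rightarrow> real"
  assumes N: "N \<ge> 1"
  shows "cs_state N \<sigma> \<theta>0 e t i = (\<Sum>i<N. \<theta>0 i) / real N + \<sigma> / real N * (\<Sum>s<t. \<Sum>j<N. e j s)
     + (1-\<sigma>)^t * (\<theta>0 i - (\<Sum>i<N. \<theta>0 i) / real N)"
proof -
  define m where "m t = (\<Sum>j<N. cs_state N \<sigma> \<theta>0 e t j) / real N" for t
  have Nr: "real N > 0" using N by simp
  have mstep: "m (Suc t) = m t + \<sigma> / real N * (\<Sum>j<N. e j t)" for t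
    unfolding m_def cs_sum_step[OF N] using Nr by (simp add: field_simps)
  have mt: "m t = m 0 + \<sigma> / real N * (\<Sum>s<t. \<Sum>j<N. e j s)" for t
    by (induction t) (simp_all add: mstep algebra_simps)
  have dt: "cs_state N \<sigma> \<theta>0 e t i - m t = (1-\<sigma>)^t * (cs_state N \<sigma> \<theta>0 e 0 i - m 0)" for t
  proof (induction t)
    case (Suc t)
    show ?case unfolding m_def cs_dev_step[OF N] using Suc by (simp add: m_def)
  qed simp
  have m0: "m 0 = (\<Sum>i<N. \<theta>0 i) / real N" by (simp add: m_def)
  show ?thesis using mt[of t] dt[of t] unfolding m0 by (simp add: algebra_simps)
qed

lemma cs_event:
  fixes e :: "nat \<Rightarrow> nat \<Rightarrow> real" and \<theta>0 :: "nat \<Rightarrow> real"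
  assumes N: "N \<ge> 1" and \<sigma>: "0 < \<sigma>" "\<sigma> < 1"
  shows "(\<exists>\<theta>s. (\<forall>i<N. (\<lambda>t. cs_state N \<sigma> \<theta>0 e t i) \<longlonglongrightarrow> \<theta>s) \<and>
            \<bar>\<theta>s - (\<Sum>i<N. \<theta>0 i) / real N\<bar> \<le> r)
     \<longleftrightarrow> (\<exists>l. (\<lambda>t. \<sigma> / real N * (\<Sum>s<t. \<Sum>j<N. e j s)) \<longlonglongrightarrow> l \<and> \<bar>l\<bar> \<le> r)"
  (is "?L \<longleftrightarrow> ?R")
proof -
  define m0 where "m0 = (\<Sum>i<N. \<theta>0 i) / real N"
  define D where "D t = \<sigma> / real N * (\<Sum>s<t. \<Sum>j<N. e j s)" for t
  have cl: "cs_state N \<sigma> \<theta>0 e t i = m0 + D t + (1-\<sigma>)^t * (\<theta>0 i - m0)" for t i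
    unfolding m0_def D_def by (rule cs_closed[OF N])
  have p0: "(\<lambda>t. (1-\<sigma>)^t * a) \<longlonglongrightarrow> 0" for a :: real
  proof -
    have "(\<lambda>t. (1-\<sigma>)^t) \<longlonglongrightarrow> 0" using \<sigma> by (intro LIMSEQ_power_zero) simp
    then show ?thesis by (rule tendsto_mult_left_zero)
  qed
  show ?thesis
  proof
    assume ?L
    then obtain \<theta>s where h: "\<forall>i<N. (\<lambda>t. cs_state N \<sigma> \<theta>0 e t i) \<longlonglongrightarrow> \<theta>s" and b: "\<bar>\<theta>s - m0\<bar> \<le> r"
      unfolding m0_def by blast
    have "(\<lambda>t. cs_state N \<sigma> \<theta>0 e t 0 - m0 - (1-\<sigma>)^t * (\<theta>0 0 - m0)) \<longlonglongrightarrow> \<theta>s - m0 - 0"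
      using h N by (intro tendsto_diff p0 tendsto_const) auto
    moreover have "cs_state N \<sigma> \<theta>0 e t 0 - m0 - (1-\<sigma>)^t * (\<theta>0 0 - m0) = D t" for t
      unfolding cl by simp
    ultimately have "D \<longlonglongrightarrow> \<theta>s - m0" by simp
    then show ?R using b unfolding D_def by blast
  next
    assume ?R
    then obtain l where h: "D \<longlonglongrightarrow> l" and b: "\<bar>l\<bar> \<le> r" unfolding D_def by blast
    have "(\<lambda>t. cs_state N \<sigma> \<theta>0 e t i) \<longlonglongrightarrow> m0 + l + 0" for i
      unfolding cl by (intro tendsto_add h p0 tendsto_const)
    moreover have "\<bar>(m0 + l + 0) - m0\<bar> \<le> r" using b by simp
    ultimately show ?L unfolding m0_def by blast
  qed
qed

theorem mainTheorem4:
  fixes M :: "'a measure" and \<eta> :: "nat \<Rightarrow> nat \<Rightarrow> 'a \<Rightarrow> real"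
    and N :: nat and \<sigma> c q b :: real and \<theta>0 :: "nat \<Rightarrow> real"
  assumes "prob_space M"
    and "N \<ge> 1"
    and "0 < \<sigma>" "\<sigma> < 1" "0 < c" "0 < q" "q < 1"
    and "0 < b" "b < 1"
    and indep: "prob_space.indep_vars M (\<lambda>_. borel) (\<lambda>(i, t). \<eta> i t) ({..<N} \<times> UNIV)"
    and lap: "\<And>i t. i < N \<Longrightarrow>
       distributed M lborel (\<eta> i t) (\<lambda>x. ennreal (laplace_density (c * q ^ t) x))"
  shows "measure M {\<omega> \<in> space M. \<exists>\<theta>s.
            (\<forall>i<N. (\<lambda>t. cs_state N \<sigma> \<theta>0 (\<lambda>j s. \<eta> j s \<omega>) t i) \<longlonglongrightarrow> \<theta>s) \<and>
            \<bar>\<theta>s - (\<Sum>i<N. \<theta>0 i) / real N\<bar>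
              \<le> sqrt 2 * c * \<sigma> / sqrt (b * real N * (1 - q\<^sup>2))}
         \<ge> 1 - b"
proof -
  interpret prob_space M by fact
  note N = \<open>N \<ge> 1\<close>
  have Nr: "real N > 0" using N by simp
  have q2: "0 < q^2" "q^2 < 1" using \<open>0<q\<close> \<open>q<1\<close> by (auto simp: power_less_one_iff)
  define r where "r = sqrt 2 * c * \<sigma> / sqrt (b * real N * (1 - q\<^sup>2))"
  have rpos: "r > 0" unfolding r_def using q2 Nr \<open>0<b\<close> \<open>0<c\<close> \<open>0<\<sigma>\<close> by auto
  have r2: "r^2 = 2 * c^2 * \<sigma>^2 / (b * real N * (1 - q^2))"
    unfolding r_def using q2 Nr \<open>0<b\<close> by (simp add: power_divide power_mult_distrib)
  have sp: "0 < c * q^t" for t using \<open>0<c\<close> \<open>0<q\<close> by simp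
  note L = lap_rv[OF lap sp]
  have rv: "\<eta> i t \<in> borel_measurable M" if "i < N" for i t using L(1)[OF that] by simp
  define D where "D T \<omega> = \<sigma> / real N * (\<Sum>s<T. \<Sum>j<N. \<eta> j s \<omega>)" for T \<omega>
  have Dm[measurable]: "D T \<in> borel_measurable M" for T
    unfolding D_def by (intro borel_measurable_times borel_measurable_const borel_measurable_sum rv) auto
  have ev: "{\<omega> \<in> space M. \<exists>\<theta>s.
            (\<forall>i<N. (\<lambda>t. cs_state N \<sigma> \<theta>0 (\<lambda>j s. \<eta> j s \<omega>) t i) \<longlonglongrightarrow> \<theta>s) \<and>
            \<bar>\<theta>s - (\<Sum>i<N. \<theta>0 i) / real N\<bar> \<le> r}
     = {\<omega> \<in> space M. Cauchy (\<lambda>T. D T \<omega>) \<and> \<bar>lim (\<lambda>T. D T \<omega>)\<bar> \<le> r}" (is "?E = ?E'")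
  proof (intro Collect_cong conj_cong refl)
    fix \<omega>
    have "(\<exists>l. (\<lambda>T. D T \<omega>) \<longlonglongrightarrow> l \<and> \<bar>l\<bar> \<le> r) \<longleftrightarrow> Cauchy (\<lambda>T. D T \<omega>) \<and> \<bar>lim (\<lambda>T. D T \<omega>)\<bar> \<le> r"
      by (metis Cauchy_convergent_iff convergent_def limI)
    then show "(\<exists>\<theta>s. (\<forall>i<N. (\<lambda>t. cs_state N \<sigma> \<theta>0 (\<lambda>j s. \<eta> j s \<omega>) t i) \<longlonglongrightarrow> \<theta>s) \<and>
            \<bar>\<theta>s - (\<Sum>i<N. \<theta>0 i) / real N\<bar> \<le> r) = (Cauchy (\<lambda>T. D T \<omega>) \<and> \<bar>lim (\<lambda>T. D T \<omega>)\<bar> \<le> r)"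
      unfolding cs_event[OF N \<open>0<\<sigma>\<close> \<open>\<sigma><1\<close>] D_def by simp
  qed
  have Eset: "?E' \<in> sets M" by measurable
  have cheb: "measure M {\<omega>\<in>space M. r < \<bar>D T \<omega>\<bar>} \<le> b" for T
  proof -
    define K where "K = {..<N} \<times> {..<T}"
    define Y where "Y = (\<lambda>(i, t). \<eta> i t)"
    have K: "finite K" "K \<subseteq> {..<N} \<times> UNIV" unfolding K_def by auto
    have sumeq: "(\<Sum>s<T. \<Sum>j<N. \<eta> j s \<omega>) = (\<Sum>k\<in>K. Y k \<omega>)" for \<omega>
    proof -
      have "(\<Sum>s<T. \<Sum>j<N. \<eta> j s \<omega>) = (\<Sum>j<N. \<Sum>s<T. \<eta> j s \<omega>)" by (rule sum.swap)
      then show ?thesis unfolding K_def Y_def by (simp add: sum.cartesian_product case_prod_unfold)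
    qed
    have Ki: "fst k < N" if "k \<in> K" for k using that unfolding K_def by auto
    have Yk: "Y k = \<eta> (fst k) (snd k)" for k unfolding Y_def by (simp add: case_prod_beta)
    have SS: "integrable M (\<lambda>\<omega>. (\<Sum>k\<in>K. Y k \<omega>)^2)"
      "expectation (\<lambda>\<omega>. (\<Sum>k\<in>K. Y k \<omega>)^2) = (\<Sum>k\<in>K. expectation (\<lambda>\<omega>. (Y k \<omega>)^2))"
      using sum_sq_expectation[OF indep[folded Y_def] K] L Ki unfolding Yk by auto
    have "(\<Sum>k\<in>K. expectation (\<lambda>\<omega>. (Y k \<omega>)^2)) = (\<Sum>k\<in>K. 2 * (c * q^(snd k))^2)"
      using L Ki unfolding Yk by (intro sum.cong) auto
    also have "\<dots> = real N * (\<Sum>s<T. 2 * c^2 * (q^2)^s)"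
    proof -
      have "(\<Sum>k\<in>K. 2 * (c * q^(snd k))^2) = (\<Sum>j<N. \<Sum>s<T. 2 * (c * q^s)^2)"
        unfolding K_def by (simp only: sum.cartesian_product') simp
      also have "\<dots> = real N * (\<Sum>s<T. 2 * (c * q^s)^2)" by simp
      also have "(\<Sum>s<T. 2 * (c * q^s)^2) = (\<Sum>s<T. 2 * c^2 * (q^2)^s)"
        by (intro sum.cong refl) (simp add: power_mult_distrib power_mult[symmetric] mult.commute)
      finally show ?thesis .
    qed
    also have "\<dots> \<le> real N * (2 * c^2 / (1 - q^2))"
    proof -
      have "(\<Sum>s<T. 2 * c^2 * (q^2)^s) = 2 * c^2 * (\<Sum>s<T. (q^2)^s)" by (simp add: sum_distrib_left)
      also have "\<dots> = 2 * c^2 * ((1 - (q^2)^T) / (1 - q^2))" using q2 by (simp add: sum_gp_strict)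
      also have "\<dots> \<le> 2 * c^2 * (1 / (1 - q^2))"
        using q2 by (intro mult_left_mono divide_right_mono) auto
      finally show ?thesis using Nr by (intro mult_left_mono) auto
    qed
    finally have ES: "expectation (\<lambda>\<omega>. (\<Sum>k\<in>K. Y k \<omega>)^2) \<le> real N * (2 * c^2 / (1 - q^2))"
      using SS(2) by simp
    have D2: "(\<lambda>\<omega>. (D T \<omega>)^2) = (\<lambda>\<omega>. (\<sigma> / real N)^2 * (\<Sum>k\<in>K. Y k \<omega>)^2)"
      unfolding D_def sumeq by (intro ext) (simp add: power2_eq_square field_simps)
    have intD: "integrable M (\<lambda>\<omega>. (D T \<omega>)^2)" unfolding D2 using SS(1) by simp
    have ED: "expectation (\<lambda>\<omega>. (D T \<omega>)^2) \<le> b * r^2"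
    proof -
      have "expectation (\<lambda>\<omega>. (D T \<omega>)^2) = (\<sigma> / real N)^2 * expectation (\<lambda>\<omega>. (\<Sum>k\<in>K. Y k \<omega>)^2)"
        unfolding D2 by simp
      also have "\<dots> \<le> (\<sigma> / real N)^2 * (real N * (2 * c^2 / (1 - q^2)))"
        using ES by (intro mult_left_mono) auto
      also have "\<dots> = b * r^2" unfolding r2 using Nr q2 \<open>0<b\<close> by (simp add: field_simps power2_eq_square)
      finally show ?thesis .
    qed
    have "measure M {\<omega>\<in>space M. r < \<bar>D T \<omega>\<bar>} \<le> measure M {\<omega>\<in>space M. r^2 \<le> (D T \<omega>)^2}"
    proof (rule finite_measure_mono)
      show "{\<omega> \<in> space M. r < \<bar>D T \<omega>\<bar>} \<subseteq> {\<omega> \<in> space M. r\<^sup>2 \<le> (D T \<omega>)\<^sup>2}"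
        using rpos by (auto simp: abs_le_square_iff[symmetric])
      show "{\<omega> \<in> space M. r\<^sup>2 \<le> (D T \<omega>)\<^sup>2} \<in> sets M" by measurable
    qed
    also have "\<dots> \<le> expectation (\<lambda>\<omega>. (D T \<omega>)^2) / r^2"
      using rpos intD by (intro integral_Markov_inequality_measure[where A="space M"]) auto
    also have "\<dots> \<le> b" using ED rpos by (simp add: divide_le_eq)
    finally show ?thesis .
  qed
  have aec: "AE \<omega> in M. convergent (\<lambda>T. D T \<omega>)"
  proof -
    define A where "A \<omega> = (\<Sum>t. ennreal (\<Sum>j<N. \<bar>\<eta> j t \<omega>\<bar>))" for \<omega>
    have Am: "(\<lambda>\<omega>. ennreal (\<Sum>j<N. \<bar>\<eta> j t \<omega>\<bar>)) \<in> borel_measurable M" for t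
      by (intro measurable_compose[OF _ measurable_ennreal] borel_measurable_sum borel_measurable_abs rv) auto
    have Amm: "A \<in> borel_measurable M" unfolding A_def using Am by measurable
    have one: "(\<integral>\<^sup>+\<omega>. ennreal (\<Sum>j<N. \<bar>\<eta> j t \<omega>\<bar>) \<partial>M) = ennreal (real N * (c * q^t))" for t
    proof -
      have "(\<integral>\<^sup>+\<omega>. ennreal (\<Sum>j<N. \<bar>\<eta> j t \<omega>\<bar>) \<partial>M) = (\<integral>\<^sup>+\<omega>. (\<Sum>j<N. ennreal \<bar>\<eta> j t \<omega>\<bar>) \<partial>M)"
        by (intro nn_integral_cong) simp
      also have "\<dots> = (\<Sum>j<N. \<integral>\<^sup>+\<omega>. ennreal \<bar>\<eta> j t \<omega>\<bar> \<partial>M)"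
        by (intro nn_integral_sum measurable_compose[OF _ measurable_ennreal] borel_measurable_abs rv) auto
      also have "\<dots> = (\<Sum>j<N. ennreal (c * q^t))" using L(6) by (intro sum.cong) auto
      also have "\<dots> = ennreal (real N * (c * q^t))" using sp[of t] by (simp add: ennreal_mult ennreal_of_nat_eq_real_of_nat)
      finally show ?thesis .
    qed
    have gs: "(\<lambda>t. real N * (c * q^t)) sums (real N * (c * (1 / (1 - q))))"
      using \<open>0<q\<close> \<open>q<1\<close> by (intro sums_mult geometric_sums) auto
    have "(\<integral>\<^sup>+\<omega>. A \<omega> \<partial>M) = (\<Sum>t. \<integral>\<^sup>+\<omega>. ennreal (\<Sum>j<N. \<bar>\<eta> j t \<omega>\<bar>) \<partial>M)"
      unfolding A_def by (rule nn_integral_suminf[OF Am])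
    also have "\<dots> = (\<Sum>t. ennreal (real N * (c * q^t)))" unfolding one ..
    also have "\<dots> = ennreal (real N * (c * (1 / (1 - q))))"
    proof (intro sums_unique[symmetric])
      show "(\<lambda>t. ennreal (real N * (c * q^t))) sums ennreal (real N * (c * (1 / (1 - q))))"
        using gs \<open>0<c\<close> \<open>0<q\<close> \<open>q<1\<close> by (subst sums_ennreal) auto
    qed
    finally have "(\<integral>\<^sup>+\<omega>. A \<omega> \<partial>M) \<noteq> \<infinity>" by simp
    then have "AE \<omega> in M. A \<omega> \<noteq> \<infinity>" by (rule nn_integral_PInf_AE[OF Amm])
    then show ?thesis
    proof (rule AE_mp, intro AE_I2 impI)
      fix \<omega> assume "A \<omega> \<noteq> \<infinity>"
      then have sa: "summable (\<lambda>t. \<Sum>j<N. \<bar>\<eta> j t \<omega>\<bar>)"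
        unfolding A_def by (intro summable_suminf_not_top) (auto simp: sum_nonneg)
      have "summable (\<lambda>t. \<Sum>j<N. \<eta> j t \<omega>)"
        by (rule summable_comparison_test[OF _ sa]) (auto intro!: exI[of _ 0] sum_abs)
      then have "(\<lambda>T. \<Sum>s<T. \<Sum>j<N. \<eta> j s \<omega>) \<longlonglongrightarrow> (\<Sum>t. \<Sum>j<N. \<eta> j t \<omega>)"
        using summable_sums sums_def by blast
      then have "(\<lambda>T. D T \<omega>) \<longlonglongrightarrow> \<sigma> / real N * (\<Sum>t. \<Sum>j<N. \<eta> j t \<omega>)"
        unfolding D_def by (rule tendsto_mult_left)
      then show "convergent (\<lambda>T. D T \<omega>)" by (rule convergentI)
    qed
  qed
  define C where "C = {\<omega>\<in>space M. Cauchy (\<lambda>T. D T \<omega>)}"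
  have Cs: "C \<in> sets M" unfolding C_def by measurable
  have C0: "measure M (space M - C) = 0"
  proof -
    have "emeasure M (space M - C) = 0"
      using AE_iff_measurable[of "space M - C" M "\<lambda>\<omega>. convergent (\<lambda>T. D T \<omega>)"] aec Cs
      unfolding C_def by (auto simp: Cauchy_convergent_iff)
    then show ?thesis by (simp add: measure_def)
  qed
  define B where "B T0 = {\<omega>\<in>space M. \<forall>T\<ge>T0. r < \<bar>D T \<omega>\<bar>}" for T0
  have Bs: "B T0 \<in> sets M" for T0 unfolding B_def by measurable
  have Binc: "incseq B" unfolding B_def incseq_def by auto
  have Bb: "measure M (B T0) \<le> b" for T0
  proof -
    have "measure M (B T0) \<le> measure M {\<omega>\<in>space M. r < \<bar>D T0 \<omega>\<bar>}"
      by (rule finite_measure_mono) (auto simp: B_def)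
    then show ?thesis using cheb[of T0] by simp
  qed
  have UBb: "measure M (\<Union>i. B i) \<le> b"
  proof (rule LIMSEQ_le_const2[OF Lim_measure_incseq])
    show "range B \<subseteq> sets M" using Bs by auto
  qed (use Binc Bb in auto)
  have sub: "space M - ?E' \<subseteq> (space M - C) \<union> (\<Union>i. B i)"
  proof
    fix \<omega> assume w: "\<omega> \<in> space M - ?E'"
    show "\<omega> \<in> (space M - C) \<union> (\<Union>i. B i)"
    proof (cases "\<omega> \<in> C")
      case True
      then have cv: "(\<lambda>T. D T \<omega>) \<longlonglongrightarrow> lim (\<lambda>T. D T \<omega>)" and wsp: "\<omega> \<in> space M"
        unfolding C_def by (auto simp: Cauchy_convergent_iff convergent_LIMSEQ_iff)
      have "r < \<bar>lim (\<lambda>T. D T \<omega>)\<bar>" using w True unfolding C_def by auto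
      moreover have "(\<lambda>T. \<bar>D T \<omega>\<bar>) \<longlonglongrightarrow> \<bar>lim (\<lambda>T. D T \<omega>)\<bar>" by (rule tendsto_rabs[OF cv])
      ultimately have "eventually (\<lambda>T. r < \<bar>D T \<omega>\<bar>) sequentially" by (rule order_tendstoD(1)[rotated])
      then obtain T0 where "\<forall>T\<ge>T0. r < \<bar>D T \<omega>\<bar>" by (auto simp: eventually_sequentially)
      then have "\<omega> \<in> B T0" using wsp unfolding B_def by auto
      then show ?thesis by auto
    qed (use w in auto)
  qed
  have "measure M (space M - ?E') \<le> measure M ((space M - C) \<union> (\<Union>i. B i))"
    using sub Cs Bs by (intro finite_measure_mono) auto
  also have "\<dots> \<le> measure M (space M - C) + measure M (\<Union>i. B i)"
    using Cs Bs by (intro measure_Un_le) auto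
  also have "\<dots> \<le> b" using C0 UBb by simp
  finally have "measure M (space M - ?E') \<le> b" .
  then have "measure M ?E' \<ge> 1 - b" using prob_compl[OF Eset] by simp
  then show ?thesis unfolding r_def[symmetric] ev .
qed
end
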